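(* Let $d:\mathcal{A}\to A$ be any derivation. Then $d(\mathcal{A}\cap\mathcal{K})\subseteq\mathcal{K}$. Consequently $d$ induces a derivation $[d]:[\mathcal{A}]\to A/\mathcal{K}\cong C(S^1)\oplus C(S^1)$, $[d]([a])=[d(a)]$.
   Context: Let $\{E_k\}$ be the canonical basis of $\ell^2(\mathbb{Z})$, $UE_k=E_{k+1}$, $\mathbb{K}E_k=kE_k$, $a(\mathbb{K})E_k=a(k)E_k$. $c(\mathbb{Z})$ is the set of $a:\mathbb{Z}\to\mathbb{C}$ with limits $a(\pm\infty)$ at $\pm\infty$; $A$ is the C$^*$-algebra generated by $U$ and all $a(\mathbb{K})$, $a\in c(\mathbb{Z})$. $\mathcal{A}$ is the algebra of finite sums $\sum_nU^na_n(\mathbb{K})$ with each $a_n$ eventually constant (constant on $k\ge k_0$ and on $k\le-k_0$ for some $k_0$). $\mathcal{K}$ is the ideal of compact operators on $\ell^2(\mathbb{Z})$; it is contained in $A$ and $A/\mathcal{K}\cong C(S^1)\oplus C(S^1)$ via $\sigma=(\sigma_+,\sigma_-)$, $\sigma_\pm(U)=e^{ix}$, $\sigma_\pm(a(\mathbb{K}))=a(\pm\infty)$; $[\mathcal{A}]$ denotes the image of $\mathcal{A}$. A derivation is a linear map satisfying the Leibniz rule. *)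

theory Defs
  imports "HOL-Analysis.Analysis" "HOL-Library.Function_Algebras"
begin

text \<open>Bounded operators on l2(Z) are represented by their matrices
  M i j = <M E_j, E_i>, of type int => int => complex.\<close>

type_synonym mat = "int \<Rightarrow> int \<Rightarrow> complex"
type_synonym vec = "int \<Rightarrow> complex"

definition l2 :: "vec \<Rightarrow> bool" where
  "l2 x \<longleftrightarrow> (\<lambda>k. (cmod (x k))^2) summable_on UNIV"

definition l2norm :: "vec \<Rightarrow> real" where
  "l2norm x = sqrt (infsum (\<lambda>k. (cmod (x k))^2) UNIV)"

definition mapply :: "mat \<Rightarrow> vec \<Rightarrow> vec" where
  "mapply M x = (\<lambda>i. infsum (\<lambda>j. M i j * x j) UNIV)"

definition bounded_mat :: "mat \<Rightarrow> bool" where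
  "bounded_mat M \<longleftrightarrow>
     (\<forall>x. l2 x \<longrightarrow> (\<forall>i. (\<lambda>j. M i j * x j) summable_on UNIV)) \<and>
     (\<exists>C. \<forall>x. l2 x \<longrightarrow> l2 (mapply M x) \<and> l2norm (mapply M x) \<le> C * l2norm x)"

definition opnorm :: "mat \<Rightarrow> real" where
  "opnorm M = Sup {l2norm (mapply M x) | x. l2 x \<and> l2norm x \<le> 1}"

definition mmult :: "mat \<Rightarrow> mat \<Rightarrow> mat" where
  "mmult M N = (\<lambda>i k. infsum (\<lambda>j. M i j * N j k) UNIV)"

definition madj :: "mat \<Rightarrow> mat" where
  "madj M = (\<lambda>i j. cnj (M j i))"

definition mscale :: "complex \<Rightarrow> mat \<Rightarrow> mat" where
  "mscale c M = (\<lambda>i j. c * M i j)"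

text \<open>U^n (n :: int): U^n E_k = E_{k+n}.\<close>
definition Upow :: "int \<Rightarrow> mat" where
  "Upow n = (\<lambda>i j. if i = j + n then 1 else 0)"

definition Ushift :: mat where
  "Ushift = Upow 1"

definition diag :: "(int \<Rightarrow> complex) \<Rightarrow> mat" where
  "diag a = (\<lambda>i j. if i = j then a j else 0)"

definition cZ :: "(int \<Rightarrow> complex) set" where
  "cZ = {a. (\<exists>l. (a \<longlongrightarrow> l) at_top) \<and> (\<exists>l. (a \<longlongrightarrow> l) at_bot)}"

definition ev_const :: "(int \<Rightarrow> complex) \<Rightarrow> bool" where
  "ev_const a \<longleftrightarrow> (\<exists>k0::int. (\<forall>k\<ge>k0. a k = a k0) \<and> (\<forall>k\<le>-k0. a k = a (-k0)))"

text \<open>The C*-algebra A generated by U and all a(K), a in c(Z):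
  the least set of bounded operators containing the generators and closed under
  +, scalar multiplication, composition, adjoint and operator-norm limits.\<close>
inductive_set Calg :: "mat set" where
  gen_U: "Ushift \<in> Calg"
| gen_diag: "a \<in> cZ \<Longrightarrow> diag a \<in> Calg"
| add: "M \<in> Calg \<Longrightarrow> N \<in> Calg \<Longrightarrow> M + N \<in> Calg"
| scale: "M \<in> Calg \<Longrightarrow> mscale c M \<in> Calg"
| mult: "M \<in> Calg \<Longrightarrow> N \<in> Calg \<Longrightarrow> mmult M N \<in> Calg"
| adj: "M \<in> Calg \<Longrightarrow> madj M \<in> Calg"
| lim: "(\<And>n. f n \<in> Calg) \<Longrightarrow> bounded_mat M \<Longrightarrow>
        (\<lambda>n. opnorm (f n - M)) \<longlonglongrightarrow> 0 \<Longrightarrow> M \<in> Calg"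

text \<open>The dense subalgebra: finite sums of U^n a_n(K), a_n eventually constant.\<close>
definition Alg0 :: "mat set" where
  "Alg0 = {M. \<exists>(F::int set) (a::int \<Rightarrow> int \<Rightarrow> complex).
             finite F \<and> (\<forall>n\<in>F. ev_const (a n)) \<and>
             M = (\<Sum>n\<in>F. mmult (Upow n) (diag (a n)))}"

text \<open>Compact operators: bounded, and the image of the closed unit ball is totally
  bounded (equivalently relatively compact, l2 being complete).\<close>
definition compact_op :: "mat \<Rightarrow> bool" where
  "compact_op M \<longleftrightarrow> bounded_mat M \<and>
     (\<forall>e>0. \<exists>F. finite F \<and> (\<forall>y\<in>F. l2 y) \<and>
        (\<forall>x. l2 x \<and> l2norm x \<le> 1 \<longrightarrow> (\<exists>y\<in>F. l2norm (mapply M x - y) < e)))"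

definition derivation_on :: "(mat \<Rightarrow> mat) \<Rightarrow> bool" where
  "derivation_on d \<longleftrightarrow>
     (\<forall>M\<in>Alg0. d M \<in> Calg) \<and>
     (\<forall>M\<in>Alg0. \<forall>N\<in>Alg0. d (M + N) = d M + d N) \<and>
     (\<forall>M\<in>Alg0. \<forall>c. d (mscale c M) = mscale c (d M)) \<and>
     (\<forall>M\<in>Alg0. \<forall>N\<in>Alg0. d (mmult M N) = mmult (d M) N + mmult M (d N))"

end

theory Submission
  imports Defs
begin


definition fnorm :: "vec \<Rightarrow> int set \<Rightarrow> real" where
  "fnorm x G = L2_set (\<lambda>i. cmod (x i)) G"

lemma fnorm_nonneg[simp]: "0 \<le> fnorm x G"
  by (simp add: fnorm_def)

lemma fnorm_sq: "finite G \<Longrightarrow> (fnorm x G)^2 = (\<Sum>i\<in>G. (cmod (x i))^2)"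
  unfolding fnorm_def L2_set_def by (simp add: sum_nonneg)

lemma bnd_l2:
  assumes "\<And>G. finite G \<Longrightarrow> fnorm x G \<le> B"
  shows "l2 x \<and> infsum (\<lambda>k. (cmod (x k))^2) UNIV \<le> B^2"
proof -
  have B0: "0 \<le> B" using assms[of "{}"] by (simp add: fnorm_def)
  have fs: "(\<Sum>i\<in>G. (cmod (x i))^2) \<le> B^2" if "finite G" for G
  proof -
    have "(fnorm x G)^2 \<le> B^2" using assms[OF that] by (simp add: power_mono)
    thus ?thesis using fnorm_sq[OF that] by simp
  qed
  have sm: "(\<lambda>k. (cmod (x k))^2) summable_on UNIV"
    apply (rule nonneg_bdd_above_summable_on)
    using fs by (auto simp: bdd_above_def)
  moreover have "infsum (\<lambda>k. (cmod (x k))^2) UNIV \<le> B^2"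
    by (rule infsum_le_finite_sums[OF sm]) (use fs in auto)
  ultimately show ?thesis by (simp add: l2_def)
qed

lemma l2_fnorm:
  assumes "l2 x" "finite G"
  shows "fnorm x G \<le> l2norm x"
proof -
  have "(\<Sum>i\<in>G. (cmod (x i))^2) \<le> infsum (\<lambda>k. (cmod (x k))^2) UNIV"
    using assms by (intro finite_sum_le_infsum) (auto simp: l2_def)
  thus ?thesis unfolding fnorm_def L2_set_def l2norm_def by simp
qed

lemma l2norm_nonneg[simp]: "0 \<le> l2norm x"
  unfolding l2norm_def by (simp add: infsum_nonneg)

lemma bnd_l2norm:
  assumes "\<And>G. finite G \<Longrightarrow> fnorm x G \<le> B"
  shows "l2 x \<and> l2norm x \<le> B"
proof -
  have B0: "0 \<le> B" using assms[of "{}"] by (simp add: fnorm_def)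
  from bnd_l2[OF assms] have "l2 x" "infsum (\<lambda>k. (cmod (x k))^2) UNIV \<le> B^2" by auto
  hence "sqrt (infsum (\<lambda>k. (cmod (x k))^2) UNIV) \<le> sqrt (B^2)" using real_sqrt_le_mono by blast
  thus ?thesis unfolding l2norm_def using B0 \<open>l2 x\<close> by simp
qed

lemma cs_inf:
  assumes "\<And>G. finite G \<Longrightarrow> fnorm u G \<le> A"
      and "\<And>G. finite G \<Longrightarrow> fnorm v G \<le> B"
  shows "(\<lambda>j. u j * v j) summable_on UNIV \<and> cmod (infsum (\<lambda>j. u j * v j) UNIV) \<le> A * B"
proof -
  have A0: "0 \<le> A" using assms(1)[of "{}"] by (simp add: fnorm_def)
  have fs: "(\<Sum>j\<in>G. cmod (u j * v j)) \<le> A * B" if "finite G" for G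
  proof -
    have "(\<Sum>j\<in>G. cmod (u j * v j)) = (\<Sum>j\<in>G. \<bar>cmod (u j)\<bar> * \<bar>cmod (v j)\<bar>)"
      by (simp add: norm_mult)
    also have "\<dots> \<le> fnorm u G * fnorm v G" unfolding fnorm_def by (rule L2_set_mult_ineq)
    also have "\<dots> \<le> A * B" using assms that A0 by (intro mult_mono) auto
    finally show ?thesis .
  qed
  have asm: "(\<lambda>j. cmod (u j * v j)) summable_on UNIV"
    apply (rule nonneg_bdd_above_summable_on)
    using fs by (auto simp: bdd_above_def)
  have "infsum (\<lambda>j. cmod (u j * v j)) UNIV \<le> A * B"
    by (rule infsum_le_finite_sums[OF asm]) (use fs in auto)
  moreover have "cmod (infsum (\<lambda>j. u j * v j) UNIV) \<le> infsum (\<lambda>j. cmod (u j * v j)) UNIV"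
    by (rule norm_infsum_bound) (use asm in simp)
  moreover have "(\<lambda>j. u j * v j) summable_on UNIV"
    by (rule abs_summable_summable) (use asm in simp)
  ultimately show ?thesis by auto
qed



lemma infsum_finsum:
  fixes f :: "'i \<Rightarrow> 'a \<Rightarrow> complex"
  assumes "finite I" "\<And>i. i \<in> I \<Longrightarrow> f i summable_on A"
  shows "(\<lambda>j. \<Sum>i\<in>I. f i j) summable_on A \<and> infsum (\<lambda>j. \<Sum>i\<in>I. f i j) A = (\<Sum>i\<in>I. infsum (f i) A)"
  using assms
proof (induction I rule: finite_induct)
  case empty
  then show ?case by simp
next
  case (insert a I)
  have s1: "f a summable_on A" using insert by auto
  have s2: "(\<lambda>j. \<Sum>i\<in>I. f i j) summable_on A" using insert by auto
  show ?case using insert s1 s2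
    by (simp add: summable_on_add infsum_add)
qed

definition fb :: "mat \<Rightarrow> real \<Rightarrow> bool" where
  "fb M C \<longleftrightarrow> 0 \<le> C \<and> (\<forall>x y F G. finite F \<longrightarrow> finite G \<longrightarrow>
     cmod (\<Sum>i\<in>G. \<Sum>j\<in>F. cnj (y i) * M i j * x j) \<le> C * fnorm x F * fnorm y G)"

lemma fbD: "fb M C \<Longrightarrow> finite F \<Longrightarrow> finite G \<Longrightarrow>
     cmod (\<Sum>i\<in>G. \<Sum>j\<in>F. cnj (y i) * M i j * x j) \<le> C * fnorm x F * fnorm y G"
  unfolding fb_def by blast

lemma fb_C: "fb M C \<Longrightarrow> 0 \<le> C" unfolding fb_def by blast

lemma fnorm_cnj[simp]: "fnorm (\<lambda>i. cnj (x i)) G = fnorm x G"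
  by (simp add: fnorm_def)

lemma fb_adj:
  assumes "fb M C" shows "fb (madj M) C"
  unfolding fb_def
proof (intro conjI allI impI)
  show "0 \<le> C" using fb_C[OF assms] .
  fix x y :: vec and F G :: "int set"
  assume F: "finite F" and G: "finite G"
  have "cnj (\<Sum>j\<in>F. \<Sum>i\<in>G. cnj (x j) * M j i * y i) = (\<Sum>j\<in>F. \<Sum>i\<in>G. x j * cnj (M j i) * cnj (y i))"
    by (simp add: cnj_sum)
  also have "\<dots> = (\<Sum>i\<in>G. \<Sum>j\<in>F. x j * cnj (M j i) * cnj (y i))" by (rule sum.swap)
  also have "\<dots> = (\<Sum>i\<in>G. \<Sum>j\<in>F. cnj (y i) * madj M i j * x j)" unfolding madj_def by (simp add: ac_simps)
  finally have "cmod (\<Sum>i\<in>G. \<Sum>j\<in>F. cnj (y i) * madj M i j * x j)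
      = cmod (cnj (\<Sum>j\<in>F. \<Sum>i\<in>G. cnj (x j) * M j i * y i))" by (simp only:)
  hence "cmod (\<Sum>i\<in>G. \<Sum>j\<in>F. cnj (y i) * madj M i j * x j)
      = cmod (\<Sum>j\<in>F. \<Sum>i\<in>G. cnj (x j) * M j i * y i)" by (simp only: complex_mod_cnj)
  also have "\<dots> \<le> C * fnorm y G * fnorm x F" using fbD[OF assms G F] .
  finally show "cmod (\<Sum>i\<in>G. \<Sum>j\<in>F. cnj (y i) * madj M i j * x j) \<le> C * fnorm x F * fnorm y G"
    by (simp add: mult_ac)
qed

lemma fb_rowbound:
  assumes "fb M C" "finite F" "finite G"
  shows "fnorm (\<lambda>i. \<Sum>j\<in>F. M i j * x j) G \<le> C * fnorm x F"
proof -
  define v where "v i = (\<Sum>j\<in>F. M i j * x j)" for i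
  define L where "L = fnorm v G"
  have gen: "(\<Sum>j\<in>F. c * M i j * x j) = c * (\<Sum>j\<in>F. M i j * x j)" for c i
    by (simp add: sum_distrib_left mult.assoc)
  have "(\<Sum>i\<in>G. \<Sum>j\<in>F. cnj (v i) * M i j * x j) = (\<Sum>i\<in>G. cnj (v i) * v i)"
    by (simp only: gen v_def)
  also have "\<dots> = (\<Sum>i\<in>G. of_real ((cmod (v i))^2))"
  proof (rule sum.cong[OF refl])
    fix i show "cnj (v i) * v i = of_real ((cmod (v i))^2)" by (metis complex_norm_square mult.commute)
  qed
  also have "\<dots> = of_real (L^2)"
    unfolding L_def fnorm_sq[OF assms(3)] by simp
  finally have "cmod (of_real (L^2)) \<le> C * fnorm x F * L"
    using fbD[OF assms(1,2,3), of v x] unfolding L_def by simp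
  moreover have "cmod (of_real (L^2)) = L * L" unfolding L_def by (simp add: power2_eq_square norm_mult)
  ultimately have "L * L \<le> (C * fnorm x F) * L" by simp
  moreover have "0 \<le> L" unfolding L_def by simp
  ultimately have "L \<le> C * fnorm x F"
    by (metis fb_C[OF assms(1)] fnorm_nonneg mult_nonneg_nonneg mult_right_le_imp_le
        not_le order_le_less order_trans)
  thus ?thesis unfolding L_def v_def .
qed

lemma fb_colbound:
  assumes "fb M C" "finite G"
  shows "fnorm (\<lambda>i. M i k) G \<le> C"
proof -
  have "fnorm (\<lambda>i. \<Sum>j\<in>{k}. M i j * 1) G \<le> C * fnorm (\<lambda>_. 1) {k}"
    by (rule fb_rowbound[OF assms(1) _ assms(2)]) simp
  thus ?thesis by (simp add: fnorm_def)
qed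

lemma fb_rowbound2:
  assumes "fb M C" "finite G"
  shows "fnorm (\<lambda>j. M i j) G \<le> C"
proof -
  have "fnorm (\<lambda>j. madj M j i) G \<le> C" by (rule fb_colbound[OF fb_adj[OF assms(1)] assms(2)])
  thus ?thesis unfolding madj_def by simp
qed

lemma fb_key:
  assumes "fb M C" "\<And>H. finite H \<Longrightarrow> fnorm w H \<le> B" "finite G"
  shows "(\<forall>i. (\<lambda>j. M i j * w j) summable_on UNIV) \<and>
         cmod (\<Sum>i\<in>G. cnj (y i) * infsum (\<lambda>j. M i j * w j) UNIV) \<le> C * fnorm y G * B"
proof -
  have sm: "(\<lambda>j. M i j * w j) summable_on UNIV" for i
    using cs_inf[of "\<lambda>j. M i j" C w B] fb_rowbound2[OF assms(1)] assms(2) by blast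
  define u where "u j = (\<Sum>i\<in>G. cnj (y i) * M i j)" for j
  have "(\<Sum>i\<in>G. cnj (y i) * infsum (\<lambda>j. M i j * w j) UNIV)
       = (\<Sum>i\<in>G. infsum (\<lambda>j. cnj (y i) * (M i j * w j)) UNIV)"
    by (simp add: infsum_cmult_right')
  also have "\<dots> = infsum (\<lambda>j. \<Sum>i\<in>G. cnj (y i) * (M i j * w j)) UNIV"
    using infsum_finsum[OF assms(3), of "\<lambda>i j. cnj (y i) * (M i j * w j)" UNIV] sm
    by (simp add: summable_on_cmult_right)
  also have "\<dots> = infsum (\<lambda>j. u j * w j) UNIV"
  proof -
    have "(\<Sum>i\<in>G. cnj (y i) * (M i j * w j)) = u j * w j" for j
      unfolding u_def by (simp add: sum_distrib_right mult.assoc)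
    thus ?thesis by simp
  qed
  finally have eq: "(\<Sum>i\<in>G. cnj (y i) * infsum (\<lambda>j. M i j * w j) UNIV) = infsum (\<lambda>j. u j * w j) UNIV" .
  have ub: "fnorm u H \<le> C * fnorm y G" if "finite H" for H
  proof -
    have "fnorm (\<lambda>j. \<Sum>i\<in>G. madj M j i * y i) H \<le> C * fnorm y G"
      by (rule fb_rowbound[OF fb_adj[OF assms(1)] assms(3) that])
    moreover have ueq: "u = (\<lambda>j. cnj (\<Sum>i\<in>G. madj M j i * y i))"
      unfolding u_def madj_def by (auto simp: cnj_sum mult_ac)
    moreover have "fnorm u H = fnorm (\<lambda>j. \<Sum>i\<in>G. madj M j i * y i) H"
      by (simp only: ueq fnorm_cnj)
    ultimately show ?thesis by simp
  qed
  have "cmod (infsum (\<lambda>j. u j * w j) UNIV) \<le> (C * fnorm y G) * B"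
    using cs_inf[of u "C * fnorm y G" w B] ub assms(2) by blast
  thus ?thesis using eq sm by simp
qed



definition FB :: "mat \<Rightarrow> bool" where "FB M \<longleftrightarrow> (\<exists>C. fb M C)"

lemma fb_add:
  assumes "fb M C1" "fb N C2" shows "fb (M + N) (C1 + C2)"
  unfolding fb_def
proof (intro conjI allI impI)
  show "0 \<le> C1 + C2" using fb_C[OF assms(1)] fb_C[OF assms(2)] by simp
  fix x y :: vec and F G :: "int set"
  assume F: "finite F" and G: "finite G"
  have "(\<Sum>i\<in>G. \<Sum>j\<in>F. cnj (y i) * (M + N) i j * x j) =
        (\<Sum>i\<in>G. \<Sum>j\<in>F. cnj (y i) * M i j * x j) + (\<Sum>i\<in>G. \<Sum>j\<in>F. cnj (y i) * N i j * x j)"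
    by (simp add: sum.distrib[symmetric] algebra_simps)
  hence "cmod (\<Sum>i\<in>G. \<Sum>j\<in>F. cnj (y i) * (M + N) i j * x j) \<le>
        cmod (\<Sum>i\<in>G. \<Sum>j\<in>F. cnj (y i) * M i j * x j) + cmod (\<Sum>i\<in>G. \<Sum>j\<in>F. cnj (y i) * N i j * x j)"
    by (simp add: norm_triangle_ineq)
  also have "\<dots> \<le> C1 * fnorm x F * fnorm y G + C2 * fnorm x F * fnorm y G"
    using fbD[OF assms(1) F G] fbD[OF assms(2) F G] by (rule add_mono)
  finally show "cmod (\<Sum>i\<in>G. \<Sum>j\<in>F. cnj (y i) * (M + N) i j * x j) \<le> (C1 + C2) * fnorm x F * fnorm y G"
    by (simp add: algebra_simps)
qed

lemma fb_scale:
  assumes "fb M C" shows "fb (mscale c M) (cmod c * C)"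
  unfolding fb_def
proof (intro conjI allI impI)
  show "0 \<le> cmod c * C" using fb_C[OF assms(1)] by simp
  fix x y :: vec and F G :: "int set"
  assume F: "finite F" and G: "finite G"
  have "(\<Sum>i\<in>G. \<Sum>j\<in>F. cnj (y i) * mscale c M i j * x j) =
        c * (\<Sum>i\<in>G. \<Sum>j\<in>F. cnj (y i) * M i j * x j)"
    by (simp add: mscale_def sum_distrib_left algebra_simps)
  hence "cmod (\<Sum>i\<in>G. \<Sum>j\<in>F. cnj (y i) * mscale c M i j * x j) =
        cmod c * cmod (\<Sum>i\<in>G. \<Sum>j\<in>F. cnj (y i) * M i j * x j)"
    by (simp add: norm_mult)
  also have "\<dots> \<le> cmod c * (C * fnorm x F * fnorm y G)"
    using fbD[OF assms(1) F G] by (simp add: mult_left_mono)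
  finally show "cmod (\<Sum>i\<in>G. \<Sum>j\<in>F. cnj (y i) * mscale c M i j * x j) \<le> cmod c * C * fnorm x F * fnorm y G"
    by (simp add: algebra_simps)
qed

lemma fb_mult:
  assumes "fb M C1" "fb N C2" shows "fb (mmult M N) (C1 * C2)"
  unfolding fb_def
proof (intro conjI allI impI)
  show "0 \<le> C1 * C2" using fb_C[OF assms(1)] fb_C[OF assms(2)] by simp
  fix x y :: vec and F G :: "int set"
  assume F: "finite F" and G: "finite G"
  define w where "w j = (\<Sum>k\<in>F. N j k * x k)" for j
  have wb: "fnorm w H \<le> C2 * fnorm x F" if "finite H" for H
    unfolding w_def by (rule fb_rowbound[OF assms(2) F that])
  have smk: "(\<lambda>j. M i j * N j k) summable_on UNIV" for i k
    using cs_inf[of "\<lambda>j. M i j" C1 "\<lambda>j. N j k" C2] fb_rowbound2[OF assms(1)] fb_colbound[OF assms(2)]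
    by blast
  have inner: "(\<Sum>k\<in>F. cnj (y i) * mmult M N i k * x k) = cnj (y i) * infsum (\<lambda>j. M i j * w j) UNIV" for i
  proof -
    have "(\<Sum>k\<in>F. cnj (y i) * mmult M N i k * x k) = cnj (y i) * (\<Sum>k\<in>F. infsum (\<lambda>j. M i j * N j k) UNIV * x k)"
      unfolding mmult_def by (simp add: sum_distrib_left mult.assoc)
    also have "(\<Sum>k\<in>F. infsum (\<lambda>j. M i j * N j k) UNIV * x k) = (\<Sum>k\<in>F. infsum (\<lambda>j. M i j * N j k * x k) UNIV)"
      by (rule sum.cong[OF refl]) (rule infsum_cmult_left'[symmetric])
    also have "(\<Sum>k\<in>F. infsum (\<lambda>j. M i j * N j k * x k) UNIV) = infsum (\<lambda>j. \<Sum>k\<in>F. M i j * N j k * x k) UNIV"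
      using infsum_finsum[OF F, of "\<lambda>k j. M i j * N j k * x k" UNIV] smk
      by (simp add: summable_on_cmult_left)
    also have "\<dots> = infsum (\<lambda>j. M i j * w j) UNIV"
      unfolding w_def by (simp add: sum_distrib_left mult.assoc)
    finally show ?thesis .
  qed
  have "cmod (\<Sum>i\<in>G. \<Sum>k\<in>F. cnj (y i) * mmult M N i k * x k)
        = cmod (\<Sum>i\<in>G. cnj (y i) * infsum (\<lambda>j. M i j * w j) UNIV)"
    by (simp only: inner)
  also have "\<dots> \<le> C1 * fnorm y G * (C2 * fnorm x F)"
    using fb_key[OF assms(1) wb G] by blast
  finally show "cmod (\<Sum>i\<in>G. \<Sum>j\<in>F. cnj (y i) * mmult M N i j * x j) \<le> C1 * C2 * fnorm x F * fnorm y G"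
    by (simp add: algebra_simps)
qed

definition wsh :: "int \<Rightarrow> (int \<Rightarrow> complex) \<Rightarrow> mat" where
  "wsh n b = (\<lambda>i j. if i = j + n then b j else 0)"

lemma fb_wsh:
  assumes B: "\<And>j. cmod (b j) \<le> B" and B0: "0 \<le> B"
  shows "fb (wsh n b) B"
  unfolding fb_def
proof (intro conjI allI impI)
  show "0 \<le> B" by fact
  fix x y :: vec and F G :: "int set"
  assume F: "finite F" and G: "finite G"
  define z where "z j = (if j + n \<in> G then cmod (y (j + n)) else 0)" for j
  have "(\<Sum>i\<in>G. \<Sum>j\<in>F. cnj (y i) * wsh n b i j * x j) = (\<Sum>j\<in>F. \<Sum>i\<in>G. cnj (y i) * wsh n b i j * x j)"
    by (rule sum.swap)
  also have "\<dots> = (\<Sum>j\<in>F. if j + n \<in> G then cnj (y (j + n)) * b j * x j else 0)"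
  proof (rule sum.cong[OF refl])
    fix j
    have "(\<Sum>i\<in>G. cnj (y i) * wsh n b i j * x j) = (\<Sum>i\<in>G. if i = j + n then cnj (y i) * b j * x j else 0)"
      unfolding wsh_def by (rule sum.cong) auto
    also have "\<dots> = (if j + n \<in> G then cnj (y (j + n)) * b j * x j else 0)"
      using G by (simp add: sum.delta)
    finally show "(\<Sum>i\<in>G. cnj (y i) * wsh n b i j * x j) = (if j + n \<in> G then cnj (y (j + n)) * b j * x j else 0)" .
  qed
  finally have eq: "(\<Sum>i\<in>G. \<Sum>j\<in>F. cnj (y i) * wsh n b i j * x j) = (\<Sum>j\<in>F. if j + n \<in> G then cnj (y (j + n)) * b j * x j else 0)" .
  have "cmod (\<Sum>j\<in>F. if j + n \<in> G then cnj (y (j + n)) * b j * x j else 0)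
        \<le> (\<Sum>j\<in>F. cmod (if j + n \<in> G then cnj (y (j + n)) * b j * x j else 0))"
    by (rule norm_sum)
  also have "\<dots> \<le> (\<Sum>j\<in>F. B * (\<bar>cmod (x j)\<bar> * \<bar>z j\<bar>))"
  proof (rule sum_mono)
    fix j
    show "cmod (if j + n \<in> G then cnj (y (j + n)) * b j * x j else 0) \<le> B * (\<bar>cmod (x j)\<bar> * \<bar>z j\<bar>)"
      using B[of j] B0 unfolding z_def
      by (auto simp: norm_mult mult_right_mono mult_left_mono mult.commute mult.left_commute)
  qed
  also have "\<dots> = B * (\<Sum>j\<in>F. \<bar>cmod (x j)\<bar> * \<bar>z j\<bar>)" by (simp add: sum_distrib_left)
  also have "\<dots> \<le> B * (fnorm x F * L2_set z F)"
    unfolding fnorm_def using B0 by (intro mult_left_mono L2_set_mult_ineq)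
  also have "L2_set z F \<le> fnorm y G"
  proof -
    have "(\<Sum>j\<in>F. (z j)^2) = (\<Sum>j\<in>{j\<in>F. j + n \<in> G}. (cmod (y (j + n)))^2)"
    proof -
      have "(z j)^2 = (if j + n \<in> G then (cmod (y (j+n)))^2 else 0)" for j by (simp add: z_def)
      thus ?thesis using F by (simp add: sum.inter_filter)
    qed
    also have "\<dots> = (\<Sum>i\<in>(\<lambda>j. j + n) ` {j\<in>F. j + n \<in> G}. (cmod (y i))^2)"
      by (subst sum.reindex) (auto simp: inj_on_def)
    also have "\<dots> \<le> (\<Sum>i\<in>G. (cmod (y i))^2)"
      using G by (intro sum_mono2) auto
    finally show ?thesis unfolding fnorm_def L2_set_def by (simp add: power2_eq_square)
  qed
  hence "B * (fnorm x F * L2_set z F) \<le> B * (fnorm x F * fnorm y G)"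
    using B0 by (simp add: mult_left_mono)
  finally show "cmod (\<Sum>i\<in>G. \<Sum>j\<in>F. cnj (y i) * wsh n b i j * x j) \<le> B * fnorm x F * fnorm y G"
    using eq by (simp add: mult.assoc)
qed



lemma sq_le_imp: "0 \<le> (L::real) \<Longrightarrow> 0 \<le> K \<Longrightarrow> L * L \<le> K * L \<Longrightarrow> L \<le> K"
  by (cases "L = 0") (auto simp: mult_le_cancel_right)

lemma cZ_bounded:
  assumes "a \<in> cZ" shows "\<exists>B\<ge>0. \<forall>j. cmod (a j) \<le> B"
proof -
  obtain l1 l2 where t1: "(a \<longlongrightarrow> l1) at_top" and t2: "(a \<longlongrightarrow> l2) at_bot"
    using assms unfolding cZ_def by blast
  have "eventually (\<lambda>j. dist (a j) l1 < 1) at_top" using tendstoD[OF t1] by simp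
  then obtain N1 where N1: "\<And>j. j \<ge> N1 \<Longrightarrow> dist (a j) l1 < 1"
    unfolding eventually_at_top_linorder by blast
  have "eventually (\<lambda>j. dist (a j) l2 < 1) at_bot" using tendstoD[OF t2] by simp
  then obtain N2 where N2: "\<And>j. j \<le> N2 \<Longrightarrow> dist (a j) l2 < 1"
    unfolding eventually_at_bot_linorder by blast
  define B where "B = max (cmod l1 + 1) (max (cmod l2 + 1) (\<Sum>j\<in>{N2..N1}. cmod (a j)))"
  have "cmod (a j) \<le> B" for j
  proof (cases "j \<ge> N1")
    case True
    hence "cmod (a j) \<le> cmod l1 + 1" using N1[OF True] norm_triangle_sub[of "a j" l1]
      unfolding dist_norm by linarith
    thus ?thesis unfolding B_def by linarith
  next
    case False
    show ?thesis
    proof (cases "j \<le> N2")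
      case True
      hence "cmod (a j) \<le> cmod l2 + 1" using N2[OF True] norm_triangle_sub[of "a j" l2]
        unfolding dist_norm by linarith
      thus ?thesis unfolding B_def by linarith
    next
      case F2: False
      have "cmod (a j) \<le> (\<Sum>j\<in>{N2..N1}. cmod (a j))"
        using False F2 by (intro member_le_sum) auto
      thus ?thesis unfolding B_def by linarith
    qed
  qed
  moreover have "0 \<le> B" unfolding B_def by (simp add: le_max_iff_disj)
  ultimately show ?thesis by blast
qed

lemma restr_l2:
  assumes "finite F"
  shows "l2 (\<lambda>j. if j \<in> F then x j else 0) \<and> l2norm (\<lambda>j. if j \<in> F then x j else 0) = fnorm x F"
proof -
  let ?f = "\<lambda>k. (cmod (if k \<in> F then x k else 0))^2"
  have "?f summable_on UNIV \<longleftrightarrow> ?f summable_on F"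
    by (rule summable_on_cong_neutral) auto
  moreover have "infsum ?f UNIV = infsum ?f F"
    by (rule infsum_cong_neutral) auto
  ultimately show ?thesis using assms unfolding l2_def l2norm_def fnorm_def L2_set_def
    by simp
qed

lemma bounded_fb:
  assumes "bounded_mat M" shows "FB M"
proof -
  obtain C0 where C0: "\<And>x. l2 x \<Longrightarrow> l2 (mapply M x) \<and> l2norm (mapply M x) \<le> C0 * l2norm x"
    using assms unfolding bounded_mat_def by blast
  define C where "C = max C0 0"
  have "fb M C" unfolding fb_def
  proof (intro conjI allI impI)
    show "0 \<le> C" unfolding C_def by simp
    fix x y :: vec and F G :: "int set"
    assume F: "finite F" and G: "finite G"
    define x' where "x' = (\<lambda>j. if j \<in> F then x j else 0)"
    have x': "l2 x'" "l2norm x' = fnorm x F" using restr_l2[OF F] unfolding x'_def by auto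
    have mx: "mapply M x' i = (\<Sum>j\<in>F. M i j * x j)" for i
    proof -
      have "mapply M x' i = infsum (\<lambda>j. M i j * x' j) F"
        unfolding mapply_def by (rule infsum_cong_neutral) (auto simp: x'_def)
      also have "\<dots> = (\<Sum>j\<in>F. M i j * x j)" using F by (simp add: x'_def)
      finally show ?thesis .
    qed
    have "(\<Sum>i\<in>G. \<Sum>j\<in>F. cnj (y i) * M i j * x j) = (\<Sum>i\<in>G. cnj (y i) * mapply M x' i)"
      by (simp add: mx sum_distrib_left mult.assoc)
    hence "cmod (\<Sum>i\<in>G. \<Sum>j\<in>F. cnj (y i) * M i j * x j) \<le> (\<Sum>i\<in>G. \<bar>cmod (y i)\<bar> * \<bar>cmod (mapply M x' i)\<bar>)"
    proof -
      have "cmod (\<Sum>i\<in>G. cnj (y i) * mapply M x' i) \<le> (\<Sum>i\<in>G. cmod (cnj (y i) * mapply M x' i))"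
        by (rule norm_sum)
      also have "\<dots> = (\<Sum>i\<in>G. \<bar>cmod (y i)\<bar> * \<bar>cmod (mapply M x' i)\<bar>)"
        by (simp add: norm_mult)
      finally show ?thesis using \<open>(\<Sum>i\<in>G. \<Sum>j\<in>F. cnj (y i) * M i j * x j) = _\<close> by simp
    qed
    also have "\<dots> \<le> fnorm y G * fnorm (mapply M x') G"
      unfolding fnorm_def by (rule L2_set_mult_ineq)
    also have "\<dots> \<le> fnorm y G * (C * fnorm x F)"
    proof (rule mult_left_mono)
      have "fnorm (mapply M x') G \<le> l2norm (mapply M x')" using C0[OF x'(1)] G l2_fnorm by blast
      also have "\<dots> \<le> C0 * fnorm x F" using C0[OF x'(1)] x'(2) by simp
      also have "\<dots> \<le> C * fnorm x F" unfolding C_def by (simp add: mult_right_mono)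
      finally show "fnorm (mapply M x') G \<le> C * fnorm x F" .
    qed simp
    finally show "cmod (\<Sum>i\<in>G. \<Sum>j\<in>F. cnj (y i) * M i j * x j) \<le> C * fnorm x F * fnorm y G"
      by (simp add: mult_ac)
  qed
  thus ?thesis unfolding FB_def by blast
qed

lemma Calg_FB: "M \<in> Calg \<Longrightarrow> FB M"
proof (induction rule: Calg.induct)
  case gen_U
  have "Ushift = wsh 1 (\<lambda>_. 1)" unfolding Ushift_def Upow_def wsh_def by auto
  moreover have "fb (wsh 1 (\<lambda>_. 1)) 1" by (rule fb_wsh) auto
  ultimately show ?case unfolding FB_def by auto
next
  case (gen_diag a)
  obtain B where B: "0 \<le> B" "\<And>j. cmod (a j) \<le> B" using cZ_bounded[OF gen_diag] by blast
  have "diag a = wsh 0 a" unfolding diag_def wsh_def by auto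
  moreover have "fb (wsh 0 a) B" by (rule fb_wsh) (use B in auto)
  ultimately show ?case unfolding FB_def by auto
next
  case (add M N) thus ?case unfolding FB_def using fb_add by blast
next
  case (scale M c) thus ?case unfolding FB_def using fb_scale by blast
next
  case (mult M N) thus ?case unfolding FB_def using fb_mult by blast
next
  case (adj M) thus ?case unfolding FB_def using fb_adj by blast
next
  case (lim f M) thus ?case using bounded_fb by blast
qed

lemma fb_apply:
  assumes "fb M C" "l2 x"
  shows "(\<forall>i. (\<lambda>j. M i j * x j) summable_on UNIV) \<and> l2 (mapply M x) \<and> l2norm (mapply M x) \<le> C * l2norm x"
proof -
  have xb: "\<And>H. finite H \<Longrightarrow> fnorm x H \<le> l2norm x" using l2_fnorm[OF assms(2)] by blast
  have sm: "\<forall>i. (\<lambda>j. M i j * x j) summable_on UNIV" using fb_key[OF assms(1) xb, of "{}"] by simp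
  define y where "y = mapply M x"
  have "fnorm y G \<le> C * l2norm x" if G: "finite G" for G
  proof -
    define L where "L = fnorm y G"
    have k: "cmod (\<Sum>i\<in>G. cnj (y i) * y i) \<le> C * L * l2norm x"
      using fb_key[OF assms(1) xb G, of y] unfolding y_def mapply_def L_def by blast
    have "(\<Sum>i\<in>G. cnj (y i) * y i) = (\<Sum>i\<in>G. of_real ((cmod (y i))^2))"
    proof (rule sum.cong[OF refl])
      fix i show "cnj (y i) * y i = of_real ((cmod (y i))^2)" by (metis complex_norm_square mult.commute)
    qed
    also have "\<dots> = of_real (L^2)" unfolding L_def fnorm_sq[OF G] by simp
    finally have e: "cmod (\<Sum>i\<in>G. cnj (y i) * y i) = L * L"
      unfolding L_def by (simp add: power2_eq_square norm_mult)
    have "L * L \<le> (C * l2norm x) * L" using k e by (simp add: mult_ac)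
    moreover have "0 \<le> L" unfolding L_def by simp
    moreover have "0 \<le> C * l2norm x" using fb_C[OF assms(1)] by simp
    ultimately show ?thesis using sq_le_imp unfolding L_def by blast
  qed
  hence "l2 y \<and> l2norm y \<le> C * l2norm x" by (rule bnd_l2norm)
  thus ?thesis using sm unfolding y_def by blast
qed

lemma fb_bounded_mat: "fb M C \<Longrightarrow> bounded_mat M"
  unfolding bounded_mat_def using fb_apply by blast



lemma l2_add:
  assumes "l2 x" "l2 y"
  shows "l2 (x + y) \<and> l2norm (x + y) \<le> l2norm x + l2norm y"
proof (rule bnd_l2norm)
  fix G :: "int set" assume G: "finite G"
  have "fnorm (x + y) G \<le> L2_set (\<lambda>i. cmod (x i) + cmod (y i)) G"
    unfolding fnorm_def by (rule L2_set_mono) (auto simp: norm_triangle_ineq)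
  also have "\<dots> \<le> fnorm x G + fnorm y G" unfolding fnorm_def by (rule L2_set_triangle_ineq)
  also have "\<dots> \<le> l2norm x + l2norm y" using l2_fnorm[OF assms(1) G] l2_fnorm[OF assms(2) G] by simp
  finally show "fnorm (x + y) G \<le> l2norm x + l2norm y" .
qed

lemma l2_scale:
  assumes "l2 x"
  shows "l2 (\<lambda>i. c * x i) \<and> l2norm (\<lambda>i. c * x i) \<le> cmod c * l2norm x"
proof (rule bnd_l2norm)
  fix G :: "int set" assume G: "finite G"
  have "fnorm (\<lambda>i. c * x i) G = cmod c * fnorm x G"
    unfolding fnorm_def by (simp add: norm_mult L2_set_right_distrib)
  also have "\<dots> \<le> cmod c * l2norm x" using l2_fnorm[OF assms G] by (simp add: mult_left_mono)
  finally show "fnorm (\<lambda>i. c * x i) G \<le> cmod c * l2norm x" .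
qed

lemma l2_diff:
  assumes "l2 x" "l2 y"
  shows "l2 (x - y) \<and> l2norm (x - y) \<le> l2norm x + l2norm y"
proof -
  have e: "x - y = x + (\<lambda>i. (-1) * y i)" by (auto simp: fun_eq_iff)
  have "l2 (\<lambda>i. (-1) * y i) \<and> l2norm (\<lambda>i. (-1) * y i) \<le> l2norm y"
    using l2_scale[OF assms(2), of "-1"] by simp
  thus ?thesis unfolding e using l2_add[OF assms(1)] by fastforce
qed

lemma l2_zero: "l2 0 \<and> l2norm 0 = 0"
  unfolding l2_def l2norm_def by simp

lemma l2_coord: "l2 z \<Longrightarrow> cmod (z r) \<le> l2norm z"
  using l2_fnorm[of z "{r}"] by (simp add: fnorm_def)

lemma l2_finsum:
  assumes "finite I" "\<And>m. m \<in> I \<Longrightarrow> l2 (v m)"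
  shows "l2 (\<lambda>i. \<Sum>m\<in>I. c m * v m i)"
  using assms
proof (induction I rule: finite_induct)
  case empty
  then show ?case using l2_zero by (simp add: zero_fun_def)
next
  case (insert a I)
  have "(\<lambda>i. \<Sum>m\<in>insert a I. c m * v m i) = (\<lambda>i. c a * v a i) + (\<lambda>i. \<Sum>m\<in>I. c m * v m i)"
    using insert by (auto simp: fun_eq_iff)
  thus ?case using l2_add l2_scale insert by simp
qed

definition TB :: "vec set \<Rightarrow> bool" where
  "TB W \<longleftrightarrow> (\<forall>e>0. \<exists>F. finite F \<and> (\<forall>y\<in>F. l2 y) \<and> (\<forall>w\<in>W. \<exists>y\<in>F. l2norm (w - y) < e))"

lemma TB_mono: "W \<subseteq> W' \<Longrightarrow> TB W' \<Longrightarrow> TB W"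
  unfolding TB_def by (meson subsetD)

lemma TB_add:
  assumes "TB A" "TB B" "\<And>a. a \<in> A \<Longrightarrow> l2 a" "\<And>b. b \<in> B \<Longrightarrow> l2 b"
  shows "TB {a + b | a b. a \<in> A \<and> b \<in> B}"
  unfolding TB_def
proof (intro allI impI)
  fix e :: real assume e: "e > 0"
  obtain FA where FA: "finite FA" "\<forall>y\<in>FA. l2 y" "\<forall>w\<in>A. \<exists>y\<in>FA. l2norm (w - y) < e/2"
    using assms(1) e unfolding TB_def by (meson half_gt_zero)
  obtain FB where FB: "finite FB" "\<forall>y\<in>FB. l2 y" "\<forall>w\<in>B. \<exists>y\<in>FB. l2norm (w - y) < e/2"
    using assms(2) e unfolding TB_def by (meson half_gt_zero)
  define F where "F = (\<lambda>(p, q). p + q) ` (FA \<times> FB)"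
  have "finite F" unfolding F_def using FA FB by simp
  moreover have "\<forall>y\<in>F. l2 y" unfolding F_def using FA FB l2_add by auto
  moreover have "\<exists>y\<in>F. l2norm (w - y) < e" if wA: "w \<in> {a + b | a b. a \<in> A \<and> b \<in> B}" for w
  proof -
    obtain a b where w: "w = a + b" "a \<in> A" "b \<in> B" using wA by blast
    obtain ya where ya: "ya \<in> FA" "l2norm (a - ya) < e/2" using FA w by blast
    obtain yb where yb: "yb \<in> FB" "l2norm (b - yb) < e/2" using FB w by blast
    have eq: "w - (ya + yb) = (a - ya) + (b - yb)" using w by (simp add: algebra_simps)
    have la: "l2 (a - ya)" using l2_diff assms(3) w ya FA by blast
    have lb: "l2 (b - yb)" using l2_diff assms(4) w yb FB by blast
    have "l2norm ((a - ya) + (b - yb)) \<le> l2norm (a - ya) + l2norm (b - yb)"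
      using l2_add[OF la lb] by blast
    hence "l2norm (w - (ya + yb)) \<le> l2norm (a - ya) + l2norm (b - yb)"
      by (simp only: eq)
    hence "l2norm (w - (ya + yb)) < e" using ya yb by simp
    moreover have "ya + yb \<in> F" unfolding F_def using ya yb by force
    ultimately show ?thesis by blast
  qed
  ultimately show "\<exists>F. finite F \<and> (\<forall>y\<in>F. l2 y) \<and> (\<forall>w\<in>{a + b | a b. a \<in> A \<and> b \<in> B}. \<exists>y\<in>F. l2norm (w - y) < e)"
    by blast
qed

lemma TB_scal:
  assumes "l2 v"
  shows "TB {(\<lambda>i. t * v i) | t. cmod t \<le> R}"
  unfolding TB_def
proof (intro allI impI)
  fix e :: real assume e: "e > 0"
  define d where "d = e / (l2norm v + 1)"
  have d: "d > 0" unfolding d_def using e by (simp add: add_nonneg_pos)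
  have "seq_compact (cball (0::complex) R)" by (simp add: compact_imp_seq_compact)
  hence "\<exists>k. finite k \<and> k \<subseteq> cball (0::complex) R \<and> cball (0::complex) R \<subseteq> (\<Union>x\<in>k. ball x d)"
    using seq_compact_imp_totally_bounded[of "cball (0::complex) R"] d by blast
  then obtain k where k: "finite k" "cball (0::complex) R \<subseteq> (\<Union>x\<in>k. ball x d)" by blast
  define F where "F = (\<lambda>g. (\<lambda>i. g * v i)) ` k"
  have "finite F" unfolding F_def using k by simp
  moreover have "\<forall>y\<in>F. l2 y" unfolding F_def using l2_scale[OF assms] by auto
  moreover have "\<exists>y\<in>F. l2norm (w - y) < e" if wA: "w \<in> {(\<lambda>i. t * v i) | t. cmod t \<le> R}" for w
  proof -
    obtain t where t: "w = (\<lambda>i. t * v i)" "cmod t \<le> R" using wA by blast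
    have "t \<in> cball (0::complex) R" using t by simp
    hence "t \<in> (\<Union>x\<in>k. ball x d)" using k(2) by (rule subsetD[rotated])
    then obtain g where g0: "g \<in> k" "t \<in> ball g d" by (rule UN_E)
    hence g: "g \<in> k" "dist g t < d" by auto
    have "w - (\<lambda>i. g * v i) = (\<lambda>i. (t - g) * v i)" using t by (auto simp: fun_eq_iff algebra_simps)
    hence "l2norm (w - (\<lambda>i. g * v i)) \<le> cmod (t - g) * l2norm v"
      using l2_scale[OF assms, of "t - g"] by simp
    also have "\<dots> \<le> cmod (t - g) * (l2norm v + 1)" by (simp add: mult_left_mono)
    also have "\<dots> < d * (l2norm v + 1)"
      using g by (intro mult_strict_right_mono) (auto simp: dist_norm norm_minus_commute add_nonneg_pos)
    also have "\<dots> = e" proof -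
      have "l2norm v + 1 \<noteq> 0" using l2norm_nonneg[of v] by linarith
      thus ?thesis unfolding d_def by simp
    qed
    finally show ?thesis unfolding F_def using g by blast
  qed
  ultimately show "\<exists>F. finite F \<and> (\<forall>y\<in>F. l2 y) \<and> (\<forall>w\<in>{(\<lambda>i. t * v i) | t. cmod t \<le> R}. \<exists>y\<in>F. l2norm (w - y) < e)"
    by (intro exI[of _ F] conjI ballI) auto
qed

lemma TB_sum:
  assumes "finite I" "\<And>m. m \<in> I \<Longrightarrow> l2 (v m)"
  shows "TB {(\<lambda>i. \<Sum>m\<in>I. c m * v m i) | c. \<forall>m\<in>I. cmod (c m) \<le> R}"
  using assms
proof (induction I rule: finite_induct)
  case empty
  have "TB {0}" unfolding TB_def using l2_zero by (intro allI impI exI[of _ "{0}"]) auto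
  moreover have "{(\<lambda>i. \<Sum>m\<in>{}. c m * v m i) | c. \<forall>m\<in>{}. cmod (c m) \<le> R} \<subseteq> {0}"
    by (auto simp: zero_fun_def)
  ultimately show ?case using TB_mono by blast
next
  case (insert a I)
  let ?A = "{(\<lambda>i. t * v a i) | t. cmod t \<le> R}"
  let ?B = "{(\<lambda>i. \<Sum>m\<in>I. c m * v m i) | c. \<forall>m\<in>I. cmod (c m) \<le> R}"
  have "TB {p + q | p q. p \<in> ?A \<and> q \<in> ?B}"
  proof (rule TB_add)
    show "TB ?A" using TB_scal insert by simp
    show "TB ?B" using insert by simp
    show "l2 p" if "p \<in> ?A" for p using that l2_scale insert by auto
    show "l2 q" if "q \<in> ?B" for q using that l2_finsum insert by auto
  qed
  moreover have "{(\<lambda>i. \<Sum>m\<in>insert a I. c m * v m i) | c. \<forall>m\<in>insert a I. cmod (c m) \<le> R}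
     \<subseteq> {p + q | p q. p \<in> ?A \<and> q \<in> ?B}"
  proof
    fix w assume "w \<in> {(\<lambda>i. \<Sum>m\<in>insert a I. c m * v m i) | c. \<forall>m\<in>insert a I. cmod (c m) \<le> R}"
    then obtain c where c: "w = (\<lambda>i. \<Sum>m\<in>insert a I. c m * v m i)" "\<forall>m\<in>insert a I. cmod (c m) \<le> R"
      by blast
    have "w = (\<lambda>i. c a * v a i) + (\<lambda>i. \<Sum>m\<in>I. c m * v m i)"
      using c insert by (auto simp: fun_eq_iff)
    moreover have "(\<lambda>i. c a * v a i) \<in> ?A" using c by blast
    moreover have "(\<lambda>i. \<Sum>m\<in>I. c m * v m i) \<in> ?B" using c by blast
    ultimately show "w \<in> {p + q | p q. p \<in> ?A \<and> q \<in> ?B}" by blast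
  qed
  ultimately show ?case using TB_mono by blast
qed

lemma cross_compact:
  assumes fbZ: "fb Z C" and S: "finite S" and Z0: "\<And>i k. i \<notin> S \<Longrightarrow> k \<notin> S \<Longrightarrow> Z i k = 0"
  shows "compact_op Z"
proof -
  define col where "col k = (\<lambda>i. if i \<in> S then 0 else Z i k)" for k
  define ev where "ev j = (\<lambda>i::int. if i = j then (1::complex) else 0)" for j
  have lcol: "l2 (col k)" for k
  proof -
    have "fnorm (col k) G \<le> C" if "finite G" for G
    proof -
      have "fnorm (col k) G \<le> fnorm (\<lambda>i. Z i k) G"
        unfolding fnorm_def col_def by (rule L2_set_mono) auto
      thus ?thesis using fb_colbound[OF fbZ that, of k] by simp
    qed
    thus ?thesis using bnd_l2norm by blast
  qed
  have lev: "l2 (ev j)" for j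
  proof -
    have "ev j = (\<lambda>i. if i \<in> {j} then 1 else 0)" unfolding ev_def by auto
    thus ?thesis using restr_l2[of "{j}" "\<lambda>_. 1"] by simp
  qed
  let ?A = "{(\<lambda>i. \<Sum>m\<in>S. c m * col m i) | c. \<forall>m\<in>S. cmod (c m) \<le> 1}"
  let ?B = "{(\<lambda>i. \<Sum>m\<in>S. c m * ev m i) | c. \<forall>m\<in>S. cmod (c m) \<le> C}"
  have tb: "TB {p + q | p q. p \<in> ?A \<and> q \<in> ?B}"
  proof (rule TB_add)
    show "TB ?A" using TB_sum S lcol by blast
    show "TB ?B" using TB_sum S lev by blast
    show "l2 p" if "p \<in> ?A" for p using that l2_finsum S lcol by auto
    show "l2 q" if "q \<in> ?B" for q using that l2_finsum S lev by auto
  qed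
  have img: "mapply Z x \<in> {p + q | p q. p \<in> ?A \<and> q \<in> ?B}" if x: "l2 x" "l2norm x \<le> 1" for x
  proof -
    have ap: "l2 (mapply Z x) \<and> l2norm (mapply Z x) \<le> C * l2norm x" using fb_apply[OF fbZ x(1)] by blast
    define P where "P = (\<lambda>i. \<Sum>m\<in>S. x m * col m i)"
    define Q where "Q = (\<lambda>i. \<Sum>m\<in>S. mapply Z x m * ev m i)"
    have eq: "mapply Z x = P + Q" unfolding P_def Q_def
    proof (rule ext)
      fix i
      show "mapply Z x i = ((\<lambda>i. \<Sum>m\<in>S. x m * col m i) + (\<lambda>i. \<Sum>m\<in>S. mapply Z x m * ev m i)) i"
      proof (cases "i \<in> S")
        case True
        thus ?thesis using S by (simp add: col_def ev_def if_distrib cong: if_cong)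
      next
        case False
        have "mapply Z x i = infsum (\<lambda>k. Z i k * x k) S"
          unfolding mapply_def by (rule infsum_cong_neutral) (use Z0 False in auto)
        also have "\<dots> = (\<Sum>m\<in>S. x m * col m i)" using S False by (simp add: col_def mult.commute)
        moreover have "(\<Sum>m\<in>S. mapply Z x m * ev m i) = 0" using False by (intro sum.neutral) (auto simp: ev_def)
        ultimately show ?thesis by simp
      qed
    qed
    have inA: "P \<in> ?A" unfolding P_def
      using l2_coord[OF x(1)] x(2) by (auto intro: order_trans)
    have inB: "Q \<in> ?B"
    proof -
      have "cmod (mapply Z x m) \<le> C" for m
      proof -
        have "cmod (mapply Z x m) \<le> C * l2norm x" using l2_coord ap by (meson order_trans)
        also have "\<dots> \<le> C * 1" using x(2) fb_C[OF fbZ] by (intro mult_left_mono) auto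
        finally show ?thesis by simp
      qed
      thus ?thesis unfolding Q_def by blast
    qed
    have "\<exists>p q. mapply Z x = p + q \<and> p \<in> ?A \<and> q \<in> ?B"
      by (intro exI[of _ P] exI[of _ Q] conjI eq inA inB)
    thus ?thesis by (simp only: mem_Collect_eq)
  qed
  show ?thesis unfolding compact_op_def
  proof (intro conjI allI impI)
    show "bounded_mat Z" using fb_bounded_mat[OF fbZ] .
    fix e :: real assume epos: "e > 0"
    obtain F where Fall: "finite F \<and> (\<forall>y\<in>F. l2 y) \<and> (\<forall>w\<in>{p + q | p q. p \<in> ?A \<and> q \<in> ?B}. \<exists>y\<in>F. l2norm (w - y) < e)"
      using tb[unfolded TB_def, rule_format, OF epos] by (rule exE)
    have F: "finite F" "\<forall>y\<in>F. l2 y" "\<forall>w\<in>{p + q | p q. p \<in> ?A \<and> q \<in> ?B}. \<exists>y\<in>F. l2norm (w - y) < e"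
      using Fall by auto
    show "\<exists>F. finite F \<and> (\<forall>y\<in>F. l2 y) \<and> (\<forall>x. l2 x \<and> l2norm x \<le> 1 \<longrightarrow> (\<exists>y\<in>F. l2norm (mapply Z x - y) < e))"
    proof (intro exI[of _ F] conjI allI impI)
      fix x assume "l2 x \<and> l2norm x \<le> 1"
      hence "mapply Z x \<in> {p + q | p q. p \<in> ?A \<and> q \<in> ?B}" using img by blast
      thus "\<exists>y\<in>F. l2norm (mapply Z x - y) < e" by (rule bspec[OF F(3)])
    qed (use F in auto)
  qed
qed



lemma sum_app: "(sum f A) x = (\<Sum>a\<in>A. f a x)"
  by (induction A rule: infinite_finite_induct) auto

lemma mmult_Upow_diag: "mmult (Upow n) (diag a) = wsh n a"
proof (intro ext)
  fix i k
  have "mmult (Upow n) (diag a) i k = infsum (\<lambda>j. Upow n i j * diag a j k) {k}"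
    unfolding mmult_def by (rule infsum_cong_neutral) (auto simp: diag_def)
  also have "\<dots> = wsh n a i k" by (simp add: Upow_def diag_def wsh_def)
  finally show "mmult (Upow n) (diag a) i k = wsh n a i k" .
qed

lemma sum_wsh_entry:
  assumes "finite F"
  shows "(\<Sum>n\<in>F. wsh n (a n)) i k = (if i - k \<in> F then a (i - k) k else 0)"
proof -
  have "(\<Sum>n\<in>F. wsh n (a n)) i k = (\<Sum>n\<in>F. if n = i - k then a n k else 0)"
    unfolding sum_app wsh_def by (rule sum.cong) auto
  also have "\<dots> = (if i - k \<in> F then a (i - k) k else 0)"
    using assms by (simp add: sum.delta')
  finally show ?thesis .
qed

lemma Alg0_entries:
  assumes "M \<in> Alg0"
  shows "\<exists>F a. finite F \<and> (\<forall>n\<in>F. ev_const (a n)) \<and> M = (\<Sum>n\<in>F. wsh n (a n)) \<and>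
          (\<forall>i k. M i k = (if i - k \<in> F then a (i - k) k else 0))"
proof -
  obtain F a where Fa: "finite F" "\<forall>n\<in>F. ev_const (a n)" "M = (\<Sum>n\<in>F. mmult (Upow n) (diag (a n)))"
    using assms unfolding Alg0_def by blast
  hence M: "M = (\<Sum>n\<in>F. wsh n (a n))" by (simp add: mmult_Upow_diag)
  have "\<forall>i k. M i k = (if i - k \<in> F then a (i - k) k else 0)"
    unfolding M using sum_wsh_entry[OF Fa(1)] by blast
  thus ?thesis using Fa(1,2) M by (intro exI[of _ F] exI[of _ a] conjI)
qed

lemma Alg0_intro:
  assumes "finite F" "\<forall>n\<in>F. ev_const (a n)" "M = (\<Sum>n\<in>F. wsh n (a n))"
  shows "M \<in> Alg0"
  unfolding Alg0_def using assms by (auto simp: mmult_Upow_diag)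

lemma ev_const_big:
  assumes "ev_const f"
  shows "\<exists>K0. \<forall>K\<ge>K0. (\<forall>k\<ge>K. f k = f K) \<and> (\<forall>k\<le>-K. f k = f (-K))"
proof -
  obtain k0 where k0: "\<forall>k\<ge>k0. f k = f k0" "\<forall>k\<le>-k0. f k = f (-k0)"
    using assms unfolding ev_const_def by blast
  have "\<forall>K\<ge>k0. (\<forall>k\<ge>K. f k = f K) \<and> (\<forall>k\<le>-K. f k = f (-K))"
  proof (intro allI impI conjI)
    fix K k assume K: "K \<ge> k0"
    { assume "k \<ge> K" thus "f k = f K" using k0 K by (metis order_trans) }
    { assume "k \<le> -K" thus "f k = f (-K)" using k0 K by (metis neg_le_iff_le order_trans) }
  qed
  thus ?thesis by blast
qed

lemma ev_const_diff:
  assumes "ev_const f" "ev_const g"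
  shows "ev_const (\<lambda>k. f k - g k)"
proof -
  obtain K1 where K1: "\<forall>K\<ge>K1. (\<forall>k\<ge>K. f k = f K) \<and> (\<forall>k\<le>-K. f k = f (-K))"
    using ev_const_big[OF assms(1)] by blast
  obtain K2 where K2: "\<forall>K\<ge>K2. (\<forall>k\<ge>K. g k = g K) \<and> (\<forall>k\<le>-K. g k = g (-K))"
    using ev_const_big[OF assms(2)] by blast
  define K where "K = max K1 K2"
  have k1: "K \<ge> K1" and k2: "K \<ge> K2" unfolding K_def by auto
  have "(\<forall>k\<ge>K. f k - g k = f K - g K) \<and> (\<forall>k\<le>-K. f k - g k = f (-K) - g (-K))"
  proof (intro conjI allI impI)
    fix k
    { assume "k \<ge> K" thus "f k - g k = f K - g K"
        using K1[rule_format, OF k1] K2[rule_format, OF k2] by metis }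
    { assume "k \<le> -K" thus "f k - g k = f (-K) - g (-K)"
        using K1[rule_format, OF k1] K2[rule_format, OF k2] by metis }
  qed
  thus ?thesis unfolding ev_const_def by blast
qed

lemma ev_const_zero: "ev_const (\<lambda>k. 0)"
  unfolding ev_const_def by auto

lemma Alg0_diff:
  assumes "M \<in> Alg0" "N \<in> Alg0"
  shows "M - N \<in> Alg0"
proof -
  obtain F a where Fa: "finite F" "\<forall>n\<in>F. ev_const (a n)"
      "\<forall>i k. M i k = (if i - k \<in> F then a (i - k) k else 0)"
    using Alg0_entries[OF assms(1)] by blast
  obtain G b where Gb: "finite G" "\<forall>n\<in>G. ev_const (b n)"
      "\<forall>i k. N i k = (if i - k \<in> G then b (i - k) k else 0)"
    using Alg0_entries[OF assms(2)] by blast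
  define c where "c n = (\<lambda>k. (if n \<in> F then a n k else 0) - (if n \<in> G then b n k else 0))" for n
  have H: "finite (F \<union> G)" using Fa Gb by simp
  have evc: "\<forall>n\<in>F \<union> G. ev_const (c n)"
  proof
    fix n assume "n \<in> F \<union> G"
    have e1: "ev_const (\<lambda>k. if n \<in> F then a n k else 0)"
      using Fa(2) ev_const_zero by (cases "n \<in> F") auto
    have e2: "ev_const (\<lambda>k. if n \<in> G then b n k else 0)"
      using Gb(2) ev_const_zero by (cases "n \<in> G") auto
    show "ev_const (c n)" unfolding c_def using ev_const_diff[OF e1 e2] .
  qed
  have "M - N = (\<Sum>n\<in>F \<union> G. wsh n (c n))"
  proof (intro ext)
    fix i k
    show "(M - N) i k = (\<Sum>n\<in>F \<union> G. wsh n (c n)) i k"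
      unfolding sum_wsh_entry[OF H] using Fa(3) Gb(3) by (auto simp: c_def)
  qed
  thus ?thesis using Alg0_intro[OF H evc] by blast
qed

lemma noncomp:
  assumes comp: "compact_op M" and J: "infinite J" and c: "c \<noteq> 0"
    and diag: "\<And>j. j \<in> J \<Longrightarrow> M (j + n) j = c"
    and off: "\<And>j j'. j \<in> J \<Longrightarrow> j' \<in> J \<Longrightarrow> j \<noteq> j' \<Longrightarrow> M (j + n) j' = 0"
  shows False
proof -
  define e where "e = cmod c / 2"
  have e: "e > 0" unfolding e_def using c by simp
  obtain G where G: "finite G" "\<forall>y\<in>G. l2 y"
      "\<forall>x. l2 x \<and> l2norm x \<le> 1 \<longrightarrow> (\<exists>y\<in>G. l2norm (mapply M x - y) < e)"
    using comp e unfolding compact_op_def by blast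
  have bm: "bounded_mat M" using comp unfolding compact_op_def by blast
  define ej where "ej j = (\<lambda>k::int. if k \<in> {j} then (1::complex) else 0)" for j
  have ejl: "l2 (ej j) \<and> l2norm (ej j) = 1" for j
    using restr_l2[of "{j}" "\<lambda>_. 1"] unfolding ej_def by (simp add: fnorm_def)
  have col: "mapply M (ej j) = (\<lambda>i. M i j)" for j
  proof
    fix i
    have "mapply M (ej j) i = infsum (\<lambda>k. M i k * ej j k) {j}"
      unfolding mapply_def by (rule infsum_cong_neutral) (auto simp: ej_def)
    thus "mapply M (ej j) i = M i j" by (simp add: ej_def)
  qed
  have lcol: "l2 (\<lambda>i. M i j)" for j
  proof -
    have "l2 (mapply M (ej j))" using bm ejl[of j] unfolding bounded_mat_def by blast
    thus ?thesis by (simp only: col)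
  qed
  have "\<forall>j\<in>J. \<exists>y. y \<in> G \<and> l2norm ((\<lambda>i. M i j) - y) < e"
  proof
    fix j assume "j \<in> J"
    have "\<exists>y\<in>G. l2norm (mapply M (ej j) - y) < e" using G(3)[rule_format, of "ej j"] ejl[of j] by simp
    thus "\<exists>y. y \<in> G \<and> l2norm ((\<lambda>i. M i j) - y) < e" by (simp only: col Bex_def)
  qed
  from bchoice[OF this] obtain g where g0: "\<forall>j\<in>J. g j \<in> G \<and> l2norm ((\<lambda>i. M i j) - g j) < e"
    by (elim exE)
  have g: "g j \<in> G \<and> l2norm ((\<lambda>i. M i j) - g j) < e" if "j \<in> J" for j
    using g0 that by blast
  have "\<not> inj_on g J"
  proof
    assume "inj_on g J"
    moreover have "g ` J \<subseteq> G" using g by blast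
    hence "finite (g ` J)" using G(1) by (rule finite_subset)
    ultimately show False using J finite_imageD by blast
  qed
  then obtain j j' where jj: "j \<in> J" "j' \<in> J" "j \<noteq> j'" "g j = g j'"
    unfolding inj_on_def by blast
  define y where "y = g j"
  have ly: "l2 y" using g[OF jj(1)] G(2) unfolding y_def by blast
  have d1: "cmod (c - y (j + n)) < e"
  proof -
    have "cmod (((\<lambda>i. M i j) - y) (j + n)) \<le> l2norm ((\<lambda>i. M i j) - y)"
      using l2_coord l2_diff[OF lcol ly] by blast
    thus ?thesis using g[OF jj(1)] diag[OF jj(1)] unfolding y_def by simp
  qed
  have d2: "cmod (y (j + n)) < e"
  proof -
    have "cmod (((\<lambda>i. M i j') - y) (j + n)) \<le> l2norm ((\<lambda>i. M i j') - y)"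
      using l2_coord l2_diff[OF lcol ly] by blast
    thus ?thesis using g[OF jj(2)] off[OF jj(1,2,3)] jj(4) unfolding y_def by simp
  qed
  have "cmod c \<le> cmod (c - y (j + n)) + cmod (y (j + n))"
    using norm_triangle_ineq[of "c - y (j + n)" "y (j + n)"] by simp
  also have "\<dots> < 2 * e" using d1 d2 by simp
  finally show False unfolding e_def by simp
qed



lemma ray_zero:
  assumes comp: "compact_op M"
    and ent: "\<And>i k. M i k = (if i - k \<in> F then a (i - k) k else 0)"
    and nF: "n \<in> F" and Lb: "\<And>m. m \<in> F \<Longrightarrow> \<bar>m\<bar> \<le> L"
    and s: "s = 1 \<or> s = -1"
    and const: "\<And>t::nat. a n (b + s * int t * (2*L+1)) = a n b"
  shows "a n b = 0"
proof (rule ccontr)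
  assume c: "a n b \<noteq> 0"
  define D where "D = 2*L+1"
  have L0: "0 \<le> L" using Lb[OF nF] by simp
  have D0: "D > 0" unfolding D_def using L0 by simp
  define phi where "phi t = b + s * int t * D" for t :: nat
  have s1: "\<bar>s\<bar> = 1" using s by auto
  have dif: "\<bar>phi t - phi t'\<bar> = \<bar>int t - int t'\<bar> * D" for t t'
  proof -
    have "phi t - phi t' = s * ((int t - int t') * D)" unfolding phi_def by (simp add: algebra_simps)
    hence "\<bar>phi t - phi t'\<bar> = \<bar>s\<bar> * (\<bar>int t - int t'\<bar> * \<bar>D\<bar>)" by (simp add: abs_mult)
    thus ?thesis using s1 D0 by simp
  qed
  have injp: "inj phi"
  proof (rule injI)
    fix t t' assume "phi t = phi t'"
    hence "\<bar>int t - int t'\<bar> * D = 0" using dif[of t t'] by simp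
    thus "t = t'" using D0 by simp
  qed
  have J: "infinite (range phi)"
    using injp finite_imageD[of phi UNIV] by (metis infinite_UNIV_nat inj_on_subset subset_UNIV)
  show False
  proof (rule noncomp[OF comp J c, of n])
    fix j assume "j \<in> range phi"
    then obtain t where t: "j = phi t" by blast
    show "M (j + n) j = a n b" using ent[of "j + n" j] nF const[of t] unfolding t phi_def D_def by simp
  next
    fix j j' assume "j \<in> range phi" "j' \<in> range phi" "j \<noteq> j'"
    then obtain t t' where t: "j = phi t" "j' = phi t'" "t \<noteq> t'" by blast
    show "M (j + n) j' = 0"
    proof (cases "j + n - j' \<in> F")
      case True
      define m where "m = j + n - j'"
      have "\<bar>m\<bar> \<le> L" using Lb True unfolding m_def by blast
      moreover have "\<bar>j - j'\<bar> = \<bar>m - n\<bar>" unfolding m_def by simp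
      moreover have "\<bar>m - n\<bar> \<le> \<bar>m\<bar> + \<bar>n\<bar>" by simp
      moreover have "\<bar>int t - int t'\<bar> \<ge> 1" using t(3) by simp
      hence "1 * D \<le> \<bar>int t - int t'\<bar> * D" using D0 by (intro mult_right_mono) auto
      hence "D \<le> \<bar>j - j'\<bar>" using dif[of t t'] t by simp
      ultimately show ?thesis using Lb[OF nF] unfolding D_def by linarith
    next
      case False
      thus ?thesis using ent[of "j + n" j'] by simp
    qed
  qed
qed

lemma alg0_support:
  assumes MA: "M \<in> Alg0" and comp: "compact_op M"
  shows "\<exists>R. \<forall>i k. M i k \<noteq> 0 \<longrightarrow> \<bar>i\<bar> \<le> R \<and> \<bar>k\<bar> \<le> R"
proof -
  obtain F a where Fa: "finite F" "\<forall>n\<in>F. ev_const (a n)"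
      and ent: "\<And>i k. M i k = (if i - k \<in> F then a (i - k) k else 0)"
    using Alg0_entries[OF MA] by blast
  define L where "L = (\<Sum>m\<in>F. \<bar>m\<bar>)"
  have Lb: "\<bar>m\<bar> \<le> L" if "m \<in> F" for m
    unfolding L_def using Fa(1) that by (intro member_le_sum) auto
  have L0: "0 \<le> L" unfolding L_def by (simp add: sum_nonneg)
  have "\<forall>n\<in>F. \<exists>k0. \<forall>k. (k \<ge> k0 \<longrightarrow> a n k = 0) \<and> (k \<le> -k0 \<longrightarrow> a n k = 0)"
  proof
    fix n assume nF: "n \<in> F"
    obtain k0 where k0: "\<forall>k\<ge>k0. a n k = a n k0" "\<forall>k\<le>-k0. a n k = a n (-k0)"
      using Fa(2) nF unfolding ev_const_def by blast
    have z1: "a n k0 = 0"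
    proof (rule ray_zero[OF comp ent nF Lb, of 1])
      fix t :: nat
      have "k0 + 1 * int t * (2 * L + 1) \<ge> k0" using L0 by simp
      thus "a n (k0 + 1 * int t * (2 * L + 1)) = a n k0" using k0(1) by blast
    qed auto
    have z2: "a n (-k0) = 0"
    proof (rule ray_zero[OF comp ent nF Lb, of "-1"])
      fix t :: nat
      have "- k0 + - 1 * int t * (2 * L + 1) \<le> -k0" using L0 by simp
      thus "a n (- k0 + - 1 * int t * (2 * L + 1)) = a n (-k0)" using k0(2) by blast
    qed auto
    show "\<exists>k0. \<forall>k. (k \<ge> k0 \<longrightarrow> a n k = 0) \<and> (k \<le> -k0 \<longrightarrow> a n k = 0)"
      using k0 z1 z2 by (intro exI[of _ k0]) auto
  qed
  from bchoice[OF this] obtain K where K: "\<forall>n\<in>F. \<forall>k. (k \<ge> K n \<longrightarrow> a n k = 0) \<and> (k \<le> -K n \<longrightarrow> a n k = 0)"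
    by (elim exE)
  define R0 where "R0 = (\<Sum>n\<in>F. \<bar>K n\<bar>)"
  have KR: "\<bar>K n\<bar> \<le> R0" if "n \<in> F" for n
    unfolding R0_def using Fa(1) that by (intro member_le_sum) auto
  have "\<bar>i\<bar> \<le> R0 + L \<and> \<bar>k\<bar> \<le> R0 + L" if nz: "M i k \<noteq> 0" for i k
  proof -
    have iF: "i - k \<in> F" and az: "a (i - k) k \<noteq> 0" using nz ent[of i k] by (auto split: if_splits)
    have "\<not> k \<ge> K (i - k)" "\<not> k \<le> - K (i - k)" using K iF az by blast+
    hence "\<bar>k\<bar> \<le> \<bar>K (i - k)\<bar>" by linarith
    hence k: "\<bar>k\<bar> \<le> R0" using KR[OF iF] by linarith
    have "\<bar>i - k\<bar> \<le> L" using Lb[OF iF] .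
    thus ?thesis using k L0 by linarith
  qed
  thus ?thesis by blast
qed

lemma mmult_diag: "mmult X (diag q) i k = X i k * q k"
proof -
  have "mmult X (diag q) i k = infsum (\<lambda>j. X i j * diag q j k) {k}"
    unfolding mmult_def by (rule infsum_cong_neutral) (auto simp: diag_def)
  thus ?thesis by (simp add: diag_def)
qed

lemma part1:
  assumes d: "derivation_on d" and MA: "M \<in> Alg0" and comp: "compact_op M"
  shows "compact_op (d M)"
proof -
  obtain R where R: "\<And>i k. M i k \<noteq> 0 \<Longrightarrow> \<bar>i\<bar> \<le> R \<and> \<bar>k\<bar> \<le> R"
    using alg0_support[OF MA comp] by blast
  define S where "S = {-R..R}"
  have Sfin: "finite S" unfolding S_def by simp
  have S_iff: "k \<in> S \<longleftrightarrow> \<bar>k\<bar> \<le> R" for k unfolding S_def by auto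
  define q where "q k = (if k \<in> S then (1::complex) else 0)" for k
  define Q where "Q = diag q"
  have evq: "ev_const q"
    unfolding ev_const_def
  proof (intro exI[of _ "\<bar>R\<bar> + 1"] conjI allI impI)
    fix k :: int
    { assume "k \<ge> \<bar>R\<bar> + 1" thus "q k = q (\<bar>R\<bar> + 1)" unfolding q_def S_iff by auto }
    { assume "k \<le> - (\<bar>R\<bar> + 1)" thus "q k = q (- (\<bar>R\<bar> + 1))" unfolding q_def S_iff by auto }
  qed
  have QA: "Q \<in> Alg0"
  proof (rule Alg0_intro[of "{0}" "\<lambda>_. q"])
    show "Q = (\<Sum>n\<in>{0}. wsh n q)" unfolding Q_def by (auto simp: wsh_def diag_def fun_eq_iff)
  qed (use evq in auto)
  have MQ: "mmult M Q = M"
  proof (intro ext)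
    fix i k
    show "mmult M Q i k = M i k"
      unfolding Q_def mmult_diag using R[of i k] by (auto simp: q_def S_iff)
  qed
  have dM: "d M = mmult (d M) Q + mmult M (d Q)"
    using d MA QA MQ unfolding derivation_on_def by metis
  have "d M \<in> Calg" using d MA unfolding derivation_on_def by blast
  then obtain C where fbC: "fb (d M) C" using Calg_FB unfolding FB_def by blast
  have Z0: "d M i k = 0" if "i \<notin> S" "k \<notin> S" for i k
  proof -
    have a1: "mmult (d M) Q i k = 0" unfolding Q_def mmult_diag using that by (simp add: q_def)
    have "\<And>j. M i j = 0" using R that(1) S_iff by blast
    hence a2: "mmult M (d Q) i k = 0" unfolding mmult_def by simp
    have "d M i k = mmult (d M) Q i k + mmult M (d Q) i k"
      by (subst dM) simp
    thus ?thesis using a1 a2 by simp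
  qed
  show ?thesis using cross_compact[OF fbC Sfin Z0] .
qed



theorem mainTheorem8:
  fixes d :: "mat \<Rightarrow> mat"
  assumes "derivation_on d"
  shows "(\<forall>M\<in>Alg0. compact_op M \<longrightarrow> compact_op (d M)) \<and>
         (\<forall>M\<in>Alg0. \<forall>N\<in>Alg0. compact_op (M - N) \<longrightarrow> compact_op (d M - d N))"
proof (intro conjI ballI impI)
  fix M assume "M \<in> Alg0" "compact_op M"
  thus "compact_op (d M)" using part1[OF assms] by blast
next
  fix M N assume MA: "M \<in> Alg0" and NA: "N \<in> Alg0" and c: "compact_op (M - N)"
  have DA: "M - N \<in> Alg0" using Alg0_diff[OF MA NA] .
  have "d ((M - N) + N) = d (M - N) + d N"
    using assms DA NA unfolding derivation_on_def by blast
  hence "d M = d (M - N) + d N" by simp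
  hence "d M - d N = d (M - N)" by (simp add: algebra_simps)
  thus "compact_op (d M - d N)" using part1[OF assms DA c] by simp
qed


end
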